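(* Let $d\ge 2$ and $n\ge 1$ be integers and let $M_x=\{|\phi_x^a\rangle: a=1,\ldots,d\}$, $x=1,\ldots,n$, be a set of mutually unbiased orthonormal bases of $\mathbb{C}^d$. Define the steering functional $F=\{F_x^a\}$ by $F_x^a=|\phi_x^a\rangle\langle\phi_x^a|$ for $x=1,\ldots,n$, $a=1,\ldots,d$. Then $$V(F)\ \ge\ \frac{n\sqrt{d}}{n+1+\sqrt{d}}.$$
   Context: Two orthonormal bases $\{|\phi_1^a\rangle\}_{a=1}^d$, $\{|\phi_2^b\rangle\}_{b=1}^d$ of $\mathbb{C}^d$ are mutually unbiased if $|\langle\phi_1^a|\phi_2^b\rangle|=1/\sqrt{d}$ for all $a,b$; a set of bases is a set of MUBs if every two distinct bases in it are mutually unbiased. An $(n,m,d)$-assemblage is a family $\sigma=\{\sigma_x^a: x=1,\ldots,n,\ a=1,\ldots,m\}$ of positive semidefinite operators on $\mathbb{C}^d$ such that $\sum_a\sigma_x^a$ does not depend on $x$ and has trace $1$; $\mathcal{Q}$ is the set of all such assemblages. An assemblage has a local hidden state (LHS) model if there exist a finite index set $\Lambda$, weights $q_\lambda\ge0$ with $\sum_\lambda q_\lambda=1$, density matrices $\sigma_\lambda$ on $\mathbb{C}^d$, and probability distributions $\{p_\lambda(a|x)\}_a$ for each $x,\lambda$, such that $\sigma_x^a=\sum_{\lambda}q_\lambda p_\lambda(a|x)\sigma_\lambda$ for all $x,a$; $\mathcal{L}$ is the set of such assemblages. For a steering functional $F=\{F_x^a\}$ (a family of $d\times d$ matrices), $\langle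 F,\sigma\rangle=\mathrm{Tr}\big(\sum_{x,a}F_x^a\sigma_x^a\big)$, $S_{LHS}(F)=\sup\{|\langle F,\sigma\rangle|:\sigma\in\mathcal{L}\}$, $S_Q(F)=\sup\{|\langle F,\sigma\rangle|:\sigma\in\mathcal{Q}\}$, and the quantum violation is $V(F)=S_Q(F)/S_{LHS}(F)$. *)

theory Defs
  imports "HOL-Analysis.Analysis"
begin

text \<open>Vectors of C^d are complex^'d, d x d matrices are complex^'d^'d, with d = CARD('d).
Measurement settings x range over {1..n}; outcomes a range over a finite type 'a.\<close>

definition cinner :: "complex^'d \<Rightarrow> complex^'d \<Rightarrow> complex" where
  "cinner v w = (\<Sum>i\<in>UNIV. cnj (v $ i) * w $ i)"

definition outer :: "complex^'d \<Rightarrow> complex^'d^'d" where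
  "outer v = (\<chi> i j. v $ i * cnj (v $ j))"

definition orthonormal_basis :: "('a::finite \<Rightarrow> complex^'d) \<Rightarrow> bool" where
  "orthonormal_basis b \<longleftrightarrow> CARD('a) = CARD('d) \<and>
     (\<forall>a a'. cinner (b a) (b a') = (if a = a' then 1 else 0))"

definition mutually_unbiased :: "('a::finite \<Rightarrow> complex^'d) \<Rightarrow> ('a \<Rightarrow> complex^'d) \<Rightarrow> bool" where
  "mutually_unbiased b1 b2 \<longleftrightarrow>
     (\<forall>a b. cmod (cinner (b1 a) (b2 b)) = 1 / sqrt (real CARD('d)))"

definition MUB_set :: "nat \<Rightarrow> (nat \<Rightarrow> 'a::finite \<Rightarrow> complex^'d) \<Rightarrow> bool" where
  "MUB_set n \<phi> \<longleftrightarrow> (\<forall>x\<in>{1..n}. orthonormal_basis (\<phi> x)) \<and>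
     (\<forall>x\<in>{1..n}. \<forall>y\<in>{1..n}. x \<noteq> y \<longrightarrow> mutually_unbiased (\<phi> x) (\<phi> y))"

definition psd :: "complex^'d^'d \<Rightarrow> bool" where
  "psd A \<longleftrightarrow> (\<forall>v. Im (cinner v (A *v v)) = 0 \<and> Re (cinner v (A *v v)) \<ge> 0)"

definition density :: "complex^'d^'d \<Rightarrow> bool" where
  "density \<rho> \<longleftrightarrow> psd \<rho> \<and> trace \<rho> = 1"

definition assemblage :: "nat \<Rightarrow> (nat \<Rightarrow> 'a::finite \<Rightarrow> complex^'d^'d) \<Rightarrow> bool" where
  "assemblage n \<sigma> \<longleftrightarrow> (\<forall>x\<in>{1..n}. \<forall>a. psd (\<sigma> x a)) \<and>
     (\<forall>x\<in>{1..n}. \<forall>y\<in>{1..n}. (\<Sum>a\<in>UNIV. \<sigma> x a) = (\<Sum>a\<in>UNIV. \<sigma> y a)) \<and>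
     (\<forall>x\<in>{1..n}. trace (\<Sum>a\<in>UNIV. \<sigma> x a) = 1)"

definition has_LHS :: "nat \<Rightarrow> (nat \<Rightarrow> 'a::finite \<Rightarrow> complex^'d^'d) \<Rightarrow> bool" where
  "has_LHS n \<sigma> \<longleftrightarrow> (\<exists>(\<Lambda>::nat set) q \<rho> p. finite \<Lambda> \<and>
     (\<forall>l\<in>\<Lambda>. q l \<ge> (0::real)) \<and> sum q \<Lambda> = 1 \<and>
     (\<forall>l\<in>\<Lambda>. density (\<rho> l)) \<and>
     (\<forall>l\<in>\<Lambda>. \<forall>x\<in>{1..n}. (\<forall>a. p l x a \<ge> (0::real)) \<and> (\<Sum>a\<in>UNIV. p l x a) = 1) \<and>
     (\<forall>x\<in>{1..n}. \<forall>a. \<sigma> x a = (\<Sum>l\<in>\<Lambda>. (q l * p l x a) *\<^sub>R \<rho> l)))"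

definition pairing :: "nat \<Rightarrow> (nat \<Rightarrow> 'a::finite \<Rightarrow> complex^'d^'d) \<Rightarrow> (nat \<Rightarrow> 'a \<Rightarrow> complex^'d^'d) \<Rightarrow> complex" where
  "pairing n F \<sigma> = trace (\<Sum>x\<in>{1..n}. \<Sum>a\<in>UNIV. F x a ** \<sigma> x a)"

definition S_LHS :: "nat \<Rightarrow> (nat \<Rightarrow> 'a::finite \<Rightarrow> complex^'d^'d) \<Rightarrow> real" where
  "S_LHS n F = Sup {cmod (pairing n F \<sigma>) | \<sigma>. has_LHS n \<sigma>}"

definition S_Q :: "nat \<Rightarrow> (nat \<Rightarrow> 'a::finite \<Rightarrow> complex^'d^'d) \<Rightarrow> real" where
  "S_Q n F = Sup {cmod (pairing n F \<sigma>) | \<sigma>. assemblage n \<sigma>}"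

definition violation :: "nat \<Rightarrow> (nat \<Rightarrow> 'a::finite \<Rightarrow> complex^'d^'d) \<Rightarrow> real" where
  "violation n F = S_Q n F / S_LHS n F"

end

theory Submission
  imports Defs
begin

definition qf :: "complex^'d^'d \<Rightarrow> complex^'d \<Rightarrow> complex^'d \<Rightarrow> complex" where
  "qf \<rho> u w = cinner u (\<rho> *v w)"

lemma qf_coord: "qf \<rho> u w = (\<Sum>i\<in>UNIV. \<Sum>j\<in>UNIV. cnj (u$i) * \<rho>$i$j * w$j)"
  by (simp add: qf_def cinner_def matrix_vector_mult_def sum_distrib_left mult.assoc)

lemma trace_outer: "trace (outer v ** \<rho>) = qf \<rho> v v"
  unfolding qf_coord trace_def outer_def matrix_matrix_mult_def
  apply simp
  apply (subst sum.swap)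
  by (simp add: sum_distrib_left mult_ac)

lemma qf_add_right: "qf \<rho> u (w1 + w2) = qf \<rho> u w1 + qf \<rho> u w2"
  by (simp add: qf_coord sum.distrib algebra_simps)
lemma qf_add_left: "qf \<rho> (u1 + u2) w = qf \<rho> u1 w + qf \<rho> u2 w"
  by (simp add: qf_coord sum.distrib algebra_simps)
lemma qf_diff_right: "qf \<rho> u (w1 - w2) = qf \<rho> u w1 - qf \<rho> u w2"
  by (simp add: qf_coord sum_subtractf algebra_simps)
lemma qf_diff_left: "qf \<rho> (u1 - u2) w = qf \<rho> u1 w - qf \<rho> u2 w"
  by (simp add: qf_coord sum_subtractf algebra_simps)
lemma qf_scale_right: "qf \<rho> u (c *s w) = c * qf \<rho> u w"
  by (simp add: qf_coord sum_distrib_left algebra_simps)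
lemma qf_scale_left: "qf \<rho> (c *s u) w = cnj c * qf \<rho> u w"
  by (simp add: qf_coord sum_distrib_left algebra_simps)
lemma qf_zero_right: "qf \<rho> u 0 = 0" by (simp add: qf_coord)
lemma qf_zero_left: "qf \<rho> 0 w = 0" by (simp add: qf_coord)
lemma qf_sum_right: "finite X \<Longrightarrow> qf \<rho> u (\<Sum>x\<in>X. f x) = (\<Sum>x\<in>X. qf \<rho> u (f x))"
  by (induction X rule: finite_induct) (auto simp: qf_add_right qf_zero_right)
lemma qf_sum_left: "finite X \<Longrightarrow> qf \<rho> (\<Sum>x\<in>X. f x) w = (\<Sum>x\<in>X. qf \<rho> (f x) w)"
  by (induction X rule: finite_induct) (auto simp: qf_add_left qf_zero_left)

lemma cinner_axis: "cinner (axis i 1) y = y$i"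
proof -
  have "\<And>j. cnj (axis i 1 $ j) * y$j = (if j = i then y$i else 0)" by (simp add: axis_def)
  then show ?thesis unfolding cinner_def by simp
qed
lemma mv_axis: "(\<rho> *v axis i 1) $ j = \<rho>$j$i"
proof -
  have "\<And>k. \<rho>$j$k * axis i 1 $ k = (if k = i then \<rho>$j$i else 0)" by (simp add: axis_def)
  then show ?thesis unfolding matrix_vector_mult_def by simp
qed
lemma qf_axis_left: "(\<Sum>i\<in>UNIV. cnj (u$i) * qf \<rho> (axis i 1) w) = qf \<rho> u w"
  by (simp add: qf_def cinner_axis) (simp add: cinner_def)
lemma qf_axis_right: "(\<Sum>i\<in>UNIV. w$i * qf \<rho> u (axis i 1)) = qf \<rho> u w"
  unfolding qf_coord apply (simp add: axis_def if_distrib sum_distrib_left cong: if_cong)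
  apply (subst sum.swap) by (simp add: sum_distrib_left mult_ac)
lemma qf_axis_diag: "qf \<rho> (axis i 1) (axis i 1) = \<rho>$i$i"
  by (simp add: qf_def cinner_axis mv_axis)

lemma psd_qf: "psd \<rho> \<Longrightarrow> Im (qf \<rho> v v) = 0 \<and> Re (qf \<rho> v v) \<ge> 0"
  by (simp add: psd_def qf_def)

lemma qf_herm:
  assumes "psd \<rho>" shows "qf \<rho> w u = cnj (qf \<rho> u w)"
proof -
  let ?a = "qf \<rho> u w" and ?b = "qf \<rho> w u"
  have e1: "qf \<rho> (u + w) (u + w) = qf \<rho> u u + qf \<rho> w w + ?a + ?b"
    by (simp add: qf_add_left qf_add_right)
  have e2: "qf \<rho> (u + \<i> *s w) (u + \<i> *s w) = qf \<rho> u u + qf \<rho> w w + \<i> * ?a - \<i> * ?b"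
    by (simp add: qf_add_left qf_add_right qf_scale_left qf_scale_right algebra_simps)
  have "Im (?a + ?b) = 0" using e1 psd_qf[OF assms, of "u+w"] psd_qf[OF assms, of u] psd_qf[OF assms, of w] by simp
  moreover have "Re ?a - Re ?b = 0" using e2 psd_qf[OF assms, of "u + \<i> *s w"] psd_qf[OF assms, of u] psd_qf[OF assms, of w] by simp
  ultimately show ?thesis by (simp add: complex_eq_iff)
qed

lemma qf_cross:
  assumes "psd \<rho>" shows "cmod (qf \<rho> u w) \<le> (Re (qf \<rho> u u) + Re (qf \<rho> w w)) / 2"
proof (cases "qf \<rho> u w = 0")
  case True then show ?thesis using psd_qf[OF assms, of u] psd_qf[OF assms, of w] by simp
next
  case False
  define a where "a = qf \<rho> u w"
  define th where "th = cnj a / cmod a"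
  have na: "cmod a \<noteq> 0" using False a_def by simp
  have sq: "a * cnj a = of_real ((cmod a)^2)" using complex_norm_square[of a] by simp
  have t1: "cnj th * th = 1" unfolding th_def using na sq
    by (simp add: field_simps power2_eq_square mult.commute)
  have t2: "th * a = cmod a" unfolding th_def using na sq
    by (simp add: field_simps power2_eq_square mult.commute)
  have t3: "cnj th * cnj a = cmod a" using t2 by (metis complex_cnj_complex_of_real complex_cnj_mult)
  have "qf \<rho> (u - th *s w) (u - th *s w) = qf \<rho> u u - th * a - cnj th * qf \<rho> w u + cnj th * th * qf \<rho> w w"
    by (simp add: qf_diff_left qf_diff_right qf_scale_left qf_scale_right a_def algebra_simps)
  also have "\<dots> = qf \<rho> u u + qf \<rho> w w - 2 * cmod a"
    using t1 t2 t3 qf_herm[OF assms, of w u] a_def by simp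
  finally have "Re (qf \<rho> u u) + Re (qf \<rho> w w) - 2 * cmod a \<ge> 0"
    using psd_qf[OF assms, of "u - th *s w"] by simp
  then show ?thesis unfolding a_def by simp
qed

lemma trace_qf: "trace \<rho> = (\<Sum>i\<in>UNIV. qf \<rho> (axis i 1) (axis i 1))"
  by (simp add: trace_def qf_axis_diag)

lemma main_bound:
  fixes w :: "nat \<Rightarrow> complex^'d" and X :: "nat set" and c :: real
  assumes ps: "psd \<rho>" and fin: "finite X" and ne: "X \<noteq> {}" and c0: "c \<ge> 0"
    and unit: "\<forall>x\<in>X. cinner (w x) (w x) = 1"
    and mub: "\<forall>x\<in>X. \<forall>y\<in>X. x \<noteq> y \<longrightarrow> cmod (cinner (w x) (w y)) \<le> c"
  shows "(\<Sum>x\<in>X. Re (qf \<rho> (w x) (w x))) \<le> (1 + c * (real (card X) - 1)) * Re (trace \<rho>)"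
proof -
  define p where "p x = Re (qf \<rho> (w x) (w x))" for x
  define S where "S = (\<Sum>x\<in>X. p x)"
  define a where "a i = (\<Sum>x\<in>X. cnj (w x $ i) *s w x)" for i
  define Q where "Q = (\<Sum>x\<in>X. \<Sum>y\<in>X. cinner (w y) (w x) * qf \<rho> (w x) (w y))"
  define T where "T = Re (trace \<rho>)"
  define N where "N = real (card X)"
  define \<beta> where "\<beta> = 1 + c * (N - 1)"
  have qfreal: "qf \<rho> (w x) (w x) = of_real (p x)" for x
    using psd_qf[OF ps, of "w x"] unfolding p_def by (simp add: complex_eq_iff)
  have I1: "(\<Sum>i\<in>UNIV. qf \<rho> (axis i 1) (a i)) = (\<Sum>x\<in>X. qf \<rho> (w x) (w x))"
  proof -
    have "(\<Sum>i\<in>UNIV. qf \<rho> (axis i 1) (a i)) = (\<Sum>i\<in>UNIV. \<Sum>x\<in>X. cnj (w x $ i) * qf \<rho> (axis i 1) (w x))"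
      unfolding a_def using fin by (simp add: qf_sum_right qf_scale_right)
    also have "\<dots> = (\<Sum>x\<in>X. \<Sum>i\<in>UNIV. cnj (w x $ i) * qf \<rho> (axis i 1) (w x))" by (rule sum.swap)
    also have "\<dots> = (\<Sum>x\<in>X. qf \<rho> (w x) (w x))" by (simp add: qf_axis_left)
    finally show ?thesis .
  qed
  have I2: "(\<Sum>i\<in>UNIV. qf \<rho> (a i) (axis i 1)) = (\<Sum>x\<in>X. qf \<rho> (w x) (w x))"
  proof -
    have "(\<Sum>i\<in>UNIV. qf \<rho> (a i) (axis i 1)) = (\<Sum>i\<in>UNIV. \<Sum>x\<in>X. w x $ i * qf \<rho> (w x) (axis i 1))"
      unfolding a_def using fin by (simp add: qf_sum_left qf_scale_left)
    also have "\<dots> = (\<Sum>x\<in>X. \<Sum>i\<in>UNIV. w x $ i * qf \<rho> (w x) (axis i 1))" by (rule sum.swap)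
    also have "\<dots> = (\<Sum>x\<in>X. qf \<rho> (w x) (w x))" by (simp add: qf_axis_right)
    finally show ?thesis .
  qed
  have I3: "(\<Sum>i\<in>UNIV. qf \<rho> (a i) (a i)) = Q"
  proof -
    have "(\<Sum>i\<in>UNIV. qf \<rho> (a i) (a i)) = (\<Sum>i\<in>UNIV. \<Sum>x\<in>X. \<Sum>y\<in>X. (w x $ i * cnj (w y $ i)) * qf \<rho> (w x) (w y))"
      unfolding a_def using fin apply (simp add: qf_sum_left qf_sum_right qf_scale_left qf_scale_right sum_distrib_left mult_ac)
      by (rule sum.cong[OF refl], rule sum.swap)
    also have "\<dots> = (\<Sum>x\<in>X. \<Sum>i\<in>UNIV. \<Sum>y\<in>X. (w x $ i * cnj (w y $ i)) * qf \<rho> (w x) (w y))" by (rule sum.swap)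
    also have "\<dots> = (\<Sum>x\<in>X. \<Sum>y\<in>X. \<Sum>i\<in>UNIV. (w x $ i * cnj (w y $ i)) * qf \<rho> (w x) (w y))"
      by (simp add: sum.swap[of _ UNIV])
    also have "\<dots> = Q" unfolding Q_def cinner_def by (simp add: sum_distrib_left sum_distrib_right mult_ac)
    finally show ?thesis .
  qed
  have expand: "(\<Sum>i\<in>UNIV. qf \<rho> (axis i 1 - of_real t *s a i) (axis i 1 - of_real t *s a i))
     = trace \<rho> - of_real t * (\<Sum>x\<in>X. qf \<rho> (w x) (w x)) - of_real t * (\<Sum>x\<in>X. qf \<rho> (w x) (w x)) + of_real t * of_real t * Q" for t
  proof -
    have "(\<Sum>i\<in>UNIV. qf \<rho> (axis i 1 - of_real t *s a i) (axis i 1 - of_real t *s a i))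
      = (\<Sum>i\<in>UNIV. qf \<rho> (axis i 1) (axis i 1) - of_real t * qf \<rho> (axis i 1) (a i) - of_real t * qf \<rho> (a i) (axis i 1) + of_real t * of_real t * qf \<rho> (a i) (a i))"
      by (simp add: qf_diff_left qf_diff_right qf_scale_left qf_scale_right algebra_simps)
    also have "\<dots> = trace \<rho> - of_real t * (\<Sum>i\<in>UNIV. qf \<rho> (axis i 1) (a i)) - of_real t * (\<Sum>i\<in>UNIV. qf \<rho> (a i) (axis i 1)) + of_real t * of_real t * (\<Sum>i\<in>UNIV. qf \<rho> (a i) (a i))"
      by (simp add: trace_qf sum.distrib sum_subtractf sum_distrib_left)
    finally show ?thesis using I1 I2 I3 by simp
  qed
  have pos: "0 \<le> T - 2 * t * S + t * t * Re Q" for t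
  proof -
    have "0 \<le> (\<Sum>i\<in>UNIV. Re (qf \<rho> (axis i 1 - of_real t *s a i) (axis i 1 - of_real t *s a i)))"
      by (rule sum_nonneg) (use psd_qf[OF ps] in auto)
    also have "\<dots> = Re (\<Sum>i\<in>UNIV. qf \<rho> (axis i 1 - of_real t *s a i) (axis i 1 - of_real t *s a i))" by simp
    also have "\<dots> = T - 2 * t * S + t * t * Re Q"
      unfolding expand T_def S_def by (simp add: qfreal)
    finally show ?thesis .
  qed
  define h where "h x y = c * (p x + p y) / 2 + (if x = y then (1 - c) * p x else 0)" for x y
  have hb: "Re (cinner (w y) (w x) * qf \<rho> (w x) (w y)) \<le> h x y" if xy: "x \<in> X" "y \<in> X" for x y
  proof (cases "x = y")
    case True then show ?thesis using unit xy qfreal[of x] by (simp add: h_def algebra_simps)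
  next
    case False
    have "Re (cinner (w y) (w x) * qf \<rho> (w x) (w y)) \<le> cmod (cinner (w y) (w x) * qf \<rho> (w x) (w y))"
      by (rule complex_Re_le_cmod)
    also have "\<dots> = cmod (cinner (w y) (w x)) * cmod (qf \<rho> (w x) (w y))" by (simp add: norm_mult)
    also have "\<dots> \<le> c * ((p x + p y) / 2)"
      apply (rule mult_mono)
      using mub xy False qf_cross[OF ps, of "w x" "w y"] c0 by (auto simp: p_def)
    finally show ?thesis using False by (simp add: h_def)
  qed
  have "Re Q = (\<Sum>x\<in>X. \<Sum>y\<in>X. Re (cinner (w y) (w x) * qf \<rho> (w x) (w y)))" unfolding Q_def by simp
  also have "\<dots> \<le> (\<Sum>x\<in>X. \<Sum>y\<in>X. h x y)"
    by (intro sum_mono) (use hb in auto)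
  also have "\<dots> = c * N * S + (1 - c) * S"
  proof -
    have "(\<Sum>x\<in>X. \<Sum>y\<in>X. h x y) = (\<Sum>x\<in>X. \<Sum>y\<in>X. c / 2 * p x + c / 2 * p y) + (\<Sum>x\<in>X. \<Sum>y\<in>X. (if x = y then (1 - c) * p x else 0))"
      unfolding h_def by (simp add: sum.distrib algebra_simps add_divide_distrib)
    also have "\<dots> = c * N * S + (1 - c) * S"
    proof -
      have r1: "(\<Sum>y\<in>X. c / 2 * p x + c / 2 * p y) = N * (c / 2) * p x + c / 2 * S" for x
        by (simp add: sum.distrib sum_distrib_left[symmetric] sum_divide_distrib[symmetric] S_def N_def)
      have r2a: "(\<Sum>x\<in>X. N * (c / 2) * p x) = N * (c / 2) * S"
        unfolding S_def by (rule sum_distrib_left[symmetric])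
      have r2: "(\<Sum>x\<in>X. N * (c / 2) * p x + c / 2 * S) = N * (c / 2) * S + N * (c / 2) * S"
        unfolding sum.distrib r2a by (simp add: N_def)
      have r3: "(\<Sum>x\<in>X. \<Sum>y\<in>X. (if x = y then (1 - c) * p x else 0)) = (1 - c) * S"
        using fin by (simp add: sum_distrib_left[symmetric] S_def)
      show ?thesis using r1 r2 r3 by (simp add: algebra_simps)
    qed
    finally show ?thesis .
  qed
  finally have QS: "Re Q \<le> \<beta> * S" unfolding \<beta>_def by (simp add: algebra_simps)
  have N1: "N \<ge> 1" unfolding N_def using fin ne by (simp add: Suc_leI card_gt_0_iff)
  have b1: "\<beta> \<ge> 1" unfolding \<beta>_def using N1 c0 by simp
  have S0: "S \<ge> 0" unfolding S_def p_def by (rule sum_nonneg) (use psd_qf[OF ps] in auto)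
  have "0 \<le> T - 2 * (1/\<beta>) * S + (1/\<beta>) * (1/\<beta>) * Re Q" by (rule pos)
  also have "\<dots> \<le> T - 2 * (1/\<beta>) * S + (1/\<beta>) * (1/\<beta>) * (\<beta> * S)"
  proof -
    have "(1/\<beta>) * (1/\<beta>) * Re Q \<le> (1/\<beta>) * (1/\<beta>) * (\<beta> * S)"
      using QS b1 by (intro mult_left_mono) auto
    then show ?thesis by linarith
  qed
  also have "\<dots> = T - S / \<beta>" using b1 by (simp add: field_simps)
  finally have "S / \<beta> \<le> T" by simp
  then have "S \<le> \<beta> * T" using b1 by (simp add: field_simps)
  then show ?thesis unfolding S_def p_def \<beta>_def N_def T_def .
qed

lemma trace_sum: "trace (\<Sum>x\<in>X. f x) = (\<Sum>x\<in>X. trace (f x))"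
  unfolding trace_def by (cases "finite X") (simp_all add: sum.swap[of _ UNIV])

lemma qf_mat_add: "qf (A + B) u w = qf A u w + qf B u w"
  by (simp add: qf_coord sum.distrib algebra_simps)
lemma qf_mat_scaleR: "qf (c *\<^sub>R A) u w = of_real c * qf A u w"
  by (simp add: qf_coord sum_distrib_left scaleR_conv_of_real[where 'a=complex] algebra_simps)
lemma qf_mat_sum: "finite L \<Longrightarrow> qf (\<Sum>l\<in>L. f l) u w = (\<Sum>l\<in>L. qf (f l) u w)"
proof (induction L rule: finite_induct)
  case empty then show ?case by (simp add: qf_coord)
next
  case (insert x F) then show ?case by (simp add: qf_mat_add)
qed

lemma qf_unit_le:
  assumes "psd \<rho>" "cinner v v = 1" shows "Re (qf \<rho> v v) \<le> Re (trace \<rho>)"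
  using main_bound[OF assms(1), of "{0}" 0 "\<lambda>_. v"] assms(2) by simp

lemma pairing_outer:
  "pairing n (\<lambda>x a. outer (\<phi> x a)) \<sigma> = (\<Sum>x\<in>{1..n}. \<Sum>a\<in>UNIV. qf (\<sigma> x a) (\<phi> x a) (\<phi> x a))"
  unfolding pairing_def by (simp add: trace_sum trace_outer)

lemma ex_max_fin: fixes g :: "'a::finite \<Rightarrow> real" shows "\<exists>m. \<forall>a. g a \<le> g m"
proof -
  have "Max (range g) \<in> range g" by (rule Max_in) auto
  then obtain m where "g m = Max (range g)" by (metis rangeE)
  moreover have "\<forall>a. g a \<le> Max (range g)" by simp
  ultimately show ?thesis by metis
qed

lemma density_qf_real: "density \<rho> \<Longrightarrow> qf \<rho> v v = of_real (Re (qf \<rho> v v))"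
  using psd_qf[of \<rho> v] by (simp add: density_def complex_eq_iff)

lemma LHS_bound:
  fixes \<phi> :: "nat \<Rightarrow> 'd::finite \<Rightarrow> complex^'d" and \<sigma> :: "nat \<Rightarrow> 'd \<Rightarrow> complex^'d^'d"
  assumes mub: "MUB_set n \<phi>" and n1: "n \<ge> 1" and h: "has_LHS n \<sigma>"
  shows "cmod (pairing n (\<lambda>x a. outer (\<phi> x a)) \<sigma>) \<le> 1 + (1 / sqrt (real CARD('d))) * (real n - 1)"
proof -
  obtain \<Lambda> :: "nat set" and q \<rho> p where fin: "finite \<Lambda>" and q0: "\<forall>l\<in>\<Lambda>. q l \<ge> (0::real)" and qs: "sum q \<Lambda> = 1"
    and dens: "\<forall>l\<in>\<Lambda>. density (\<rho> l)"
    and pp: "\<forall>l\<in>\<Lambda>. \<forall>x\<in>{1..n}. (\<forall>a. p l x a \<ge> (0::real)) \<and> (\<Sum>a\<in>UNIV. p l x a) = 1"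
    and sig: "\<forall>x\<in>{1..n}. \<forall>a. \<sigma> x a = (\<Sum>l\<in>\<Lambda>. (q l * p l x a) *\<^sub>R \<rho> l)"
    using h unfolding has_LHS_def by blast
  define c where "c = 1 / sqrt (real CARD('d))"
  define \<beta> where "\<beta> = 1 + c * (real n - 1)"
  define f where "f l x a = Re (qf (\<rho> l) (\<phi> x a) (\<phi> x a))" for l x a
  have f0: "l \<in> \<Lambda> \<Longrightarrow> f l x a \<ge> 0" for l x a
    using dens psd_qf unfolding f_def density_def by blast
  have "pairing n (\<lambda>x a. outer (\<phi> x a)) \<sigma>
     = (\<Sum>x\<in>{1..n}. \<Sum>a\<in>UNIV. \<Sum>l\<in>\<Lambda>. of_real (q l * p l x a) * qf (\<rho> l) (\<phi> x a) (\<phi> x a))"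
    unfolding pairing_outer using sig fin by (simp add: qf_mat_sum qf_mat_scaleR)
  also have "\<dots> = of_real (\<Sum>x\<in>{1..n}. \<Sum>a\<in>UNIV. \<Sum>l\<in>\<Lambda>. q l * p l x a * f l x a)"
  proof -
    have "of_real (q l * p l x a) * qf (\<rho> l) (\<phi> x a) (\<phi> x a) = of_real (q l * p l x a * f l x a)"
      if "l \<in> \<Lambda>" for l x a
    proof -
      have "qf (\<rho> l) (\<phi> x a) (\<phi> x a) = of_real (f l x a)"
        unfolding f_def using dens that density_qf_real by blast
      then show ?thesis by simp
    qed
    then show ?thesis unfolding of_real_sum by (intro sum.cong refl) auto
  qed
  finally have pe: "pairing n (\<lambda>x a. outer (\<phi> x a)) \<sigma> = of_real (\<Sum>x\<in>{1..n}. \<Sum>a\<in>UNIV. \<Sum>l\<in>\<Lambda>. q l * p l x a * f l x a)" .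
  have R: "(\<Sum>x\<in>{1..n}. \<Sum>a\<in>UNIV. \<Sum>l\<in>\<Lambda>. q l * p l x a * f l x a) = (\<Sum>l\<in>\<Lambda>. q l * (\<Sum>x\<in>{1..n}. \<Sum>a\<in>UNIV. p l x a * f l x a))"
    by (simp add: sum_distrib_left mult.assoc sum.swap[of _ \<Lambda>] sum.swap[of _ "{1..n}"])
  have G: "(\<Sum>x\<in>{1..n}. \<Sum>a\<in>UNIV. p l x a * f l x a) \<le> \<beta>" if l: "l \<in> \<Lambda>" for l
  proof -
    have "\<forall>x. \<exists>m. \<forall>a. f l x a \<le> f l x m" using ex_max_fin by blast
    then obtain m where m: "\<And>x a. f l x a \<le> f l x (m x)" by metis
    have "(\<Sum>x\<in>{1..n}. \<Sum>a\<in>UNIV. p l x a * f l x a) \<le> (\<Sum>x\<in>{1..n}. \<Sum>a\<in>UNIV. p l x a * f l x (m x))"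
      by (intro sum_mono mult_left_mono) (use m pp l in auto)
    also have "\<dots> = (\<Sum>x\<in>{1..n}. f l x (m x))"
      by (intro sum.cong refl) (use pp l in \<open>simp add: sum_distrib_right[symmetric]\<close>)
    also have "\<dots> \<le> (1 + c * (real (card {1..n}) - 1)) * Re (trace (\<rho> l))"
      unfolding f_def
    proof (rule main_bound)
      show "psd (\<rho> l)" using dens l density_def by blast
      show "finite {1..n}" by simp
      show "{1..n} \<noteq> {}" using n1 by simp
      show "c \<ge> 0" unfolding c_def by simp
      show "\<forall>x\<in>{1..n}. cinner (\<phi> x (m x)) (\<phi> x (m x)) = 1"
        using mub unfolding MUB_set_def orthonormal_basis_def by auto
      show "\<forall>x\<in>{1..n}. \<forall>y\<in>{1..n}. x \<noteq> y \<longrightarrow> cmod (cinner (\<phi> x (m x)) (\<phi> y (m y))) \<le> c"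
        using mub unfolding MUB_set_def mutually_unbiased_def c_def by auto
    qed
    also have "\<dots> = \<beta>" using dens l unfolding density_def \<beta>_def by simp
    finally show ?thesis .
  qed
  have "(\<Sum>l\<in>\<Lambda>. q l * (\<Sum>x\<in>{1..n}. \<Sum>a\<in>UNIV. p l x a * f l x a)) \<le> (\<Sum>l\<in>\<Lambda>. q l * \<beta>)"
    by (intro sum_mono mult_left_mono) (use G q0 in auto)
  also have "\<dots> = \<beta>" using qs by (simp add: sum_distrib_right[symmetric])
  finally have le: "(\<Sum>l\<in>\<Lambda>. q l * (\<Sum>x\<in>{1..n}. \<Sum>a\<in>UNIV. p l x a * f l x a)) \<le> \<beta>" .
  have ge: "(\<Sum>l\<in>\<Lambda>. q l * (\<Sum>x\<in>{1..n}. \<Sum>a\<in>UNIV. p l x a * f l x a)) \<ge> 0"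
    by (intro sum_nonneg mult_nonneg_nonneg) (use q0 pp f0 in auto)
  have "cmod (pairing n (\<lambda>x a. outer (\<phi> x a)) \<sigma>) = \<bar>\<Sum>l\<in>\<Lambda>. q l * (\<Sum>x\<in>{1..n}. \<Sum>a\<in>UNIV. p l x a * f l x a)\<bar>"
    by (simp only: pe R norm_of_real)
  then show ?thesis using le ge unfolding \<beta>_def c_def by simp
qed

lemma psd_qf_iff: "psd \<rho> \<longleftrightarrow> (\<forall>v. Im (qf \<rho> v v) = 0 \<and> Re (qf \<rho> v v) \<ge> 0)"
  by (simp add: psd_def qf_def)

lemma psd_scaleR: "psd A \<Longrightarrow> c \<ge> 0 \<Longrightarrow> psd (c *\<^sub>R A)"
  by (simp add: psd_qf_iff qf_mat_scaleR)

lemma cinner_self: "cinner v v = of_real (\<Sum>i\<in>UNIV. (cmod (v$i))^2)"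
  unfolding cinner_def of_real_sum
  by (intro sum.cong refl) (metis complex_norm_square mult.commute)

lemma qf_mat1: "qf (mat 1) u w = cinner u w"
  by (simp add: qf_def)

lemma psd_mat1: "psd (mat 1)"
  by (simp add: psd_qf_iff qf_mat1 cinner_self sum_nonneg)

lemma outer_mv: "outer v *v w = cinner v w *s v"
  by (simp add: vec_eq_iff matrix_vector_mult_def outer_def cinner_def sum_distrib_left mult_ac)

lemma cinner_scale_right: "cinner u (c *s w) = c * cinner u w"
  by (simp add: cinner_def sum_distrib_left mult_ac)

lemma cinner_cnj: "cinner w v = cnj (cinner v w)"
  by (simp add: cinner_def mult.commute)

lemma qf_outer: "qf (outer v) w w = of_real ((cmod (cinner v w))^2)"
  using complex_norm_square[of "cinner v w"]
  by (simp add: qf_def outer_mv cinner_scale_right cinner_cnj[of w v] mult.commute)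

lemma psd_outer: "psd (outer v)"
  by (simp add: psd_qf_iff qf_outer)

lemma parseval:
  fixes b :: "'d::finite \<Rightarrow> complex^'d"
  assumes "orthonormal_basis b"
  shows "(\<Sum>a\<in>UNIV. outer (b a)) = mat 1"
proof -
  define U :: "complex^'d^'d" where "U = (\<chi> i a. b a $ i)"
  define Uh :: "complex^'d^'d" where "Uh = (\<chi> a i. cnj (b a $ i))"
  have "Uh ** U = mat 1"
    using assms unfolding orthonormal_basis_def
    by (simp add: vec_eq_iff matrix_matrix_mult_def U_def Uh_def mat_def cinner_def)
  then have "U ** Uh = mat 1" using matrix_left_right_inverse by blast
  then show ?thesis
    by (simp add: vec_eq_iff matrix_matrix_mult_def U_def Uh_def outer_def)
qed

lemma Q_bound:
  fixes \<phi> :: "nat \<Rightarrow> 'd::finite \<Rightarrow> complex^'d" and \<sigma> :: "nat \<Rightarrow> 'd \<Rightarrow> complex^'d^'d"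
  assumes mub: "MUB_set n \<phi>" and as: "assemblage n \<sigma>"
  shows "cmod (pairing n (\<lambda>x a. outer (\<phi> x a)) \<sigma>) \<le> real n"
proof -
  have ps: "x \<in> {1..n} \<Longrightarrow> psd (\<sigma> x a)" for x a using as unfolding assemblage_def by blast
  have un: "x \<in> {1..n} \<Longrightarrow> cinner (\<phi> x a) (\<phi> x a) = 1" for x a
    using mub unfolding MUB_set_def orthonormal_basis_def by auto
  have "cmod (pairing n (\<lambda>x a. outer (\<phi> x a)) \<sigma>) \<le> (\<Sum>x\<in>{1..n}. \<Sum>a\<in>UNIV. cmod (qf (\<sigma> x a) (\<phi> x a) (\<phi> x a)))"
    unfolding pairing_outer by (rule order_trans[OF norm_sum sum_mono]) (rule norm_sum)
  also have "\<dots> \<le> (\<Sum>x\<in>{1..n}. \<Sum>a\<in>UNIV. Re (trace (\<sigma> x a)))"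
  proof (intro sum_mono)
    fix x a assume x: "x \<in> {1..n}"
    have "cmod (qf (\<sigma> x a) (\<phi> x a) (\<phi> x a)) = Re (qf (\<sigma> x a) (\<phi> x a) (\<phi> x a))"
      using psd_qf[OF ps[of x a, OF x], of "\<phi> x a"] by (simp add: cmod_eq_Re)
    also have "\<dots> \<le> Re (trace (\<sigma> x a))" by (rule qf_unit_le[OF ps[of x a, OF x] un[of x a, OF x]])
    finally show "cmod (qf (\<sigma> x a) (\<phi> x a) (\<phi> x a)) \<le> Re (trace (\<sigma> x a))" .
  qed
  also have "\<dots> = (\<Sum>x\<in>{1..n}. Re (trace (\<Sum>a\<in>UNIV. \<sigma> x a)))" by (simp add: trace_sum)
  also have "\<dots> = (\<Sum>x\<in>{1..n}. 1)"
  proof (intro sum.cong refl)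
    fix x assume "x \<in> {1..n}"
    then have "trace (\<Sum>a\<in>UNIV. \<sigma> x a) = 1" using as unfolding assemblage_def by blast
    then show "Re (trace (\<Sum>a\<in>UNIV. \<sigma> x a)) = 1" by simp
  qed
  finally show ?thesis by simp
qed

lemma Q_exists:
  fixes \<phi> :: "nat \<Rightarrow> 'd::finite \<Rightarrow> complex^'d"
  assumes mub: "MUB_set n \<phi>"
  shows "\<exists>\<sigma>. assemblage n \<sigma> \<and> cmod (pairing n (\<lambda>x a. outer (\<phi> x a)) \<sigma>) = real n"
proof -
  define d where "d = real CARD('d)"
  have d0: "d > 0" unfolding d_def by simp
  define \<sigma> where "\<sigma> x a = (1/d) *\<^sub>R outer (\<phi> x a)" for x a
  have un: "x \<in> {1..n} \<Longrightarrow> cinner (\<phi> x a) (\<phi> x a) = 1" for x a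
    using mub unfolding MUB_set_def orthonormal_basis_def by auto
  have sums: "x \<in> {1..n} \<Longrightarrow> (\<Sum>a\<in>UNIV. \<sigma> x a) = (1/d) *\<^sub>R mat 1" for x
  proof -
    assume x: "x \<in> {1..n}"
    then have "orthonormal_basis (\<phi> x)" using mub unfolding MUB_set_def by blast
    then show ?thesis unfolding \<sigma>_def by (simp add: scaleR_sum_right[symmetric] parseval)
  qed
  have "assemblage n \<sigma>"
    unfolding assemblage_def
  proof (intro conjI ballI allI)
    show "psd (\<sigma> x a)" for x a unfolding \<sigma>_def using d0 by (simp add: psd_scaleR psd_outer)
    show "sum (\<sigma> x) UNIV = sum (\<sigma> y) UNIV" if "x \<in> {1..n}" "y \<in> {1..n}" for x y
      using sums that by simp
    show "trace (sum (\<sigma> x) UNIV) = 1" if "x \<in> {1..n}" for x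
      using sums[OF that] d0 by (simp add: trace_def mat_def d_def scaleR_conv_of_real[where 'a=complex])
  qed
  moreover have "pairing n (\<lambda>x a. outer (\<phi> x a)) \<sigma> = of_real (real n)"
  proof -
    have "pairing n (\<lambda>x a. outer (\<phi> x a)) \<sigma> = (\<Sum>x\<in>{1..n}. \<Sum>a::'d\<in>UNIV. of_real (1/d))"
      unfolding pairing_outer \<sigma>_def using un by (intro sum.cong refl) (simp add: qf_mat_scaleR qf_outer)
    also have "\<dots> = of_real (real n)" using d0 by (simp add: d_def)
    finally show ?thesis .
  qed
  ultimately show ?thesis by auto
qed

lemma LHS_pos:
  fixes \<phi> :: "nat \<Rightarrow> 'd::finite \<Rightarrow> complex^'d"
  assumes mub: "MUB_set n \<phi>" and n1: "n \<ge> 1"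
  shows "\<exists>\<sigma>. has_LHS n \<sigma> \<and> cmod (pairing n (\<lambda>x a. outer (\<phi> x a)) \<sigma>) > 0"
proof -
  define d where "d = real CARD('d)"
  have d0: "d > 0" unfolding d_def by simp
  define \<rho>0 :: "complex^'d^'d" where "\<rho>0 = (1/d) *\<^sub>R mat 1"
  define \<sigma> where "\<sigma> x a = (\<Sum>l\<in>{0::nat}. (1 * (1/d)) *\<^sub>R \<rho>0)" for x :: nat and a :: 'd
  have un: "x \<in> {1..n} \<Longrightarrow> cinner (\<phi> x a) (\<phi> x a) = 1" for x a
    using mub unfolding MUB_set_def orthonormal_basis_def by auto
  have dens: "density \<rho>0"
    unfolding density_def \<rho>0_def using d0 psd_scaleR[OF psd_mat1, of "1/d"]
    by (simp add: trace_def mat_def d_def scaleR_conv_of_real[where 'a=complex])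
  have "has_LHS n \<sigma>"
    unfolding has_LHS_def
    apply (rule exI[of _ "{0}"], rule exI[of _ "\<lambda>_. 1"], rule exI[of _ "\<lambda>_. \<rho>0"], rule exI[of _ "\<lambda>_ _ _. 1/d"])
    using dens d0 by (simp add: \<sigma>_def d_def)
  moreover have "pairing n (\<lambda>x a. outer (\<phi> x a)) \<sigma> = of_real (real n / d)"
  proof -
    have "pairing n (\<lambda>x a. outer (\<phi> x a)) \<sigma> = (\<Sum>x\<in>{1..n}. \<Sum>a::'d\<in>UNIV. of_real (1/d * (1/d)))"
      unfolding pairing_outer \<sigma>_def \<rho>0_def using un by (intro sum.cong refl) (simp add: qf_mat_scaleR qf_mat1)
    also have "\<dots> = of_real (real n / d)" using d0 by (simp add: d_def)
    finally show ?thesis .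
  qed
  ultimately show ?thesis using n1 d0 by auto
qed

theorem theorem1:
  fixes n :: nat and \<phi> :: "nat \<Rightarrow> 'd::finite \<Rightarrow> complex^'d"
  assumes "CARD('d) \<ge> 2" and "n \<ge> 1" and "MUB_set n \<phi>"
  shows "violation n (\<lambda>x a. outer (\<phi> x a)) \<ge>
           real n * sqrt (real CARD('d)) / (real n + 1 + sqrt (real CARD('d)))"
proof -
  define F where "F = (\<lambda>x a. outer (\<phi> x a))"
  define sd where "sd = sqrt (real CARD('d))"
  define \<beta> where "\<beta> = 1 + (1 / sd) * (real n - 1)"
  have sd0: "sd > 0" unfolding sd_def by simp
  have n1: "real n \<ge> 1" using assms(2) by simp
  have b1: "\<beta> \<ge> 1" unfolding \<beta>_def using sd0 n1 by simp
  define SL where "SL = {cmod (pairing n F \<sigma>) | \<sigma>. has_LHS n \<sigma>}"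
  define SQ where "SQ = {cmod (pairing n F \<sigma>) | \<sigma>. assemblage n \<sigma>}"
  obtain \<sigma>0 where s0: "has_LHS n \<sigma>0" "cmod (pairing n F \<sigma>0) > 0"
    using LHS_pos[OF assms(3) assms(2)] unfolding F_def by blast
  have SLb: "\<forall>v\<in>SL. v \<le> \<beta>" unfolding SL_def \<beta>_def sd_def F_def
    using LHS_bound[OF assms(3) assms(2)] by blast
  have SLne: "SL \<noteq> {}" using s0 unfolding SL_def by blast
  have "S_LHS n F \<le> \<beta>" unfolding S_LHS_def SL_def[symmetric]
    using SLne SLb by (intro cSup_least) auto
  moreover have "S_LHS n F \<ge> cmod (pairing n F \<sigma>0)" unfolding S_LHS_def SL_def[symmetric]
    using SLb s0 unfolding SL_def by (intro cSup_upper) (auto simp: bdd_above_def)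
  ultimately have L: "0 < S_LHS n F" "S_LHS n F \<le> \<beta>" using s0(2) by linarith+
  obtain \<sigma>1 where s1: "assemblage n \<sigma>1" "cmod (pairing n F \<sigma>1) = real n"
    using Q_exists[OF assms(3)] unfolding F_def by blast
  have SQb: "\<forall>v\<in>SQ. v \<le> real n" unfolding SQ_def F_def using Q_bound[OF assms(3)] by blast
  have Q: "S_Q n F \<ge> real n" unfolding S_Q_def SQ_def[symmetric]
    using SQb s1 unfolding SQ_def by (intro cSup_upper) (auto simp: bdd_above_def intro!: exI[of _ \<sigma>1])
  have "real n / \<beta> \<le> real n / S_LHS n F"
    using L n1 by (intro divide_left_mono) auto
  also have "\<dots> \<le> S_Q n F / S_LHS n F" using L Q by (intro divide_right_mono) auto
  finally have V: "real n / \<beta> \<le> violation n F" unfolding violation_def .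
  have "real n * sd / (real n + 1 + sd) \<le> real n / \<beta>"
  proof -
    have e: "real n / \<beta> = real n * sd / (sd + real n - 1)"
      unfolding \<beta>_def using sd0 by (simp add: field_simps)
    have "real n * sd / (real n + 1 + sd) \<le> real n * sd / (sd + real n - 1)"
      using sd0 n1 by (intro divide_left_mono) auto
    then show ?thesis using e by simp
  qed
  then show ?thesis using V unfolding F_def sd_def by simp
qed

end
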